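(* For $k\in\{1,\dots,m\}$ let $A_k\in\mathbb{R}^n$ with $\|A_k\|>0$ and $b_k\in\mathbb{R}$, and let $f(X)=\max_{k\in\{1,\dots,m\}}\left(A_k^TX+b_k\right)$. Let $X_0\in\mathbb{R}^n$ and $R>0$ be such that for all $X$ in the open ball $B(X_0,R)$: (1) $0\notin\partial f(X)$, and (2) every $d_X\in\partial f(X)$ satisfies $\|d_X\|\ge\underline{d}$, where $\underline{d}>0$ is a fixed constant. Then there exists $X\in B(X_0,R)$ such that $$f(X)\le f(X_0)-\underline{d}\cdot\frac{R}{2}.$$
   Context: $\partial f(X)$ denotes the subdifferential of the convex function $f$ at $X$. The function $f$ is the standing function of the paper's section, the maximum of the affine functions $A_k^TX+b_k$. *)

theory Defs
  imports "HOL-Analysis.Analysis"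
begin

definition subdifferential :: "('a::real_inner \<Rightarrow> real) \<Rightarrow> 'a \<Rightarrow> 'a set" where
  "subdifferential f x = {g. \<forall>y. f y \<ge> f x + g \<bullet> (y - x)}"

definition maxaffine :: "(nat \<Rightarrow> real ^ 'n) \<Rightarrow> (nat \<Rightarrow> real) \<Rightarrow> nat \<Rightarrow> real ^ 'n \<Rightarrow> real" where
  "maxaffine A b m X = Max ((\<lambda>k. A k \<bullet> X + b k) ` {1..m})"

end

theory Submission
  imports Defs
begin

lemma small_t_limit:
  fixes a b c t0 :: real
  assumes "t0 > 0" "c \<ge> 0" "\<And>t. 0 < t \<Longrightarrow> t < t0 \<Longrightarrow> a \<ge> b - t * c"
  shows "a \<ge> b"
proof (rule ccontr)
  assume "\<not> a \<ge> b"
  define t where "t = min (t0/2) ((b - a) / (2*(c+1)))"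
  have t: "0 < t" "t < t0" using assms \<open>\<not> a \<ge> b\<close> by (auto simp: t_def)
  have "t * c \<le> (b - a) / (2*(c+1)) * c" using t assms(2) by (intro mult_right_mono) (auto simp: t_def)
  also have "\<dots> = (b - a) * (c / (2*(c+1)))" by simp
  also have "\<dots> < (b - a) * 1"
  proof (rule mult_strict_left_mono)
    show "c / (2*(c+1)) < 1" using assms(2) by (simp add: field_simps)
  qed (use \<open>\<not> a \<ge> b\<close> in simp)
  also have "\<dots> = b - a" by simp
  finally show False using assms(3)[OF t] by linarith
qed

lemma prox_step:
  fixes f :: "'a::euclidean_space \<Rightarrow> real"
  assumes cvx: "\<And>x y t. 0 \<le> t \<Longrightarrow> t \<le> 1 \<Longrightarrow> f (x + t *\<^sub>R (y - x)) \<le> f x + t * (f y - f x)"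
    and lip: "\<And>x y. f x \<le> f y + L * dist x y" and L: "L > 0" and lam: "lam > 0"
  shows "\<exists>Z. dist Y Z \<le> 2*L/lam \<and> (\<forall>y. f y \<ge> f Z + (lam *\<^sub>R (Y - Z)) \<bullet> (y - Z))"
proof -
  define \<rho> where "\<rho> = 2*L/lam + 1"
  define h where "h x = f x + lam/2 * (norm (x - Y))^2" for x
  have "L-lipschitz_on UNIV f"
  proof (rule lipschitz_onI)
    fix x y :: 'a
    show "dist (f x) (f y) \<le> L * dist x y"
      using lip[of x y] lip[of y x] by (simp add: dist_real_def dist_commute abs_le_iff)
  qed (use L in simp)
  hence cf: "continuous_on UNIV f" by (rule lipschitz_on_continuous_on)
  have ch: "continuous_on (cball Y \<rho>) h" unfolding h_def
    by (intro continuous_intros continuous_on_subset[OF cf]) auto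
  have "2*L/lam > 0" using L lam by simp
  hence "\<rho> > 0" by (simp add: \<rho>_def)
  hence "cball Y \<rho> \<noteq> {}" by auto
  then obtain Z where Z: "Z \<in> cball Y \<rho>" and Zmin: "\<And>y. y \<in> cball Y \<rho> \<Longrightarrow> h Z \<le> h y"
    using continuous_attains_inf[OF compact_cball _ ch] by blast
  define d where "d = dist Y Z"
  have dZ: "d = norm (Z - Y)" by (simp add: d_def dist_norm norm_minus_commute)
  have "h Z \<le> h Y" using Zmin[of Y] \<open>\<rho> > 0\<close> by simp
  hence "f Z + lam/2 * d^2 \<le> f Y" by (simp add: h_def dZ)
  moreover have "f Y \<le> f Z + L * d" using lip[of Y Z] by (simp add: d_def)
  ultimately have "lam/2 * d^2 \<le> L * d" by linarith
  hence dle: "d \<le> 2*L/lam"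
  proof (cases "d = 0")
    case False
    hence "d > 0" by (simp add: d_def)
    with \<open>lam/2 * d^2 \<le> L * d\<close> have "lam/2 * d \<le> L" by (simp add: power2_eq_square)
    thus ?thesis using lam by (simp add: field_simps)
  qed (use L lam in simp)
  have "\<forall>y. f y \<ge> f Z + (lam *\<^sub>R (Y - Z)) \<bullet> (y - Z)"
  proof
    fix y
    define v where "v = y - Z"
    define t0 where "t0 = min 1 (1 / (norm v + 1))"
    have h1: "0 < norm v + 1" using norm_ge_zero[of v] by linarith
    have t0: "t0 > 0" using h1 by (simp add: t0_def)
    have "f y - f Z \<ge> lam * (v \<bullet> (Y - Z))"
    proof (rule small_t_limit[OF t0, of "lam/2 * (norm v)^2"])
      show "0 \<le> lam/2 * (norm v)^2" using lam by simp
      fix t :: real assume t: "0 < t" "t < t0"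
      have "t * norm v < 1"
      proof -
        have "t * norm v \<le> t0 * norm v" using t by (simp add: mult_right_mono)
        also have "\<dots> \<le> (1 / (norm v + 1)) * norm v" unfolding t0_def by (intro mult_right_mono) auto
        also have "\<dots> < 1" using h1 by (simp add: field_simps)
        finally show ?thesis .
      qed
      have "dist Y (Z + t *\<^sub>R v) \<le> d + t * norm v"
        using dist_triangle[of Y "Z + t *\<^sub>R v" Z] t by (simp add: d_def dist_norm)
      hence "Z + t *\<^sub>R v \<in> cball Y \<rho>" using dle \<open>t * norm v < 1\<close> by (simp add: \<rho>_def)
      hence "h Z \<le> h (Z + t *\<^sub>R v)" by (rule Zmin)
      moreover have "(norm (Z + t *\<^sub>R v - Y))^2 = (norm (Z - Y))^2 + 2 * t * (v \<bullet> (Z - Y)) + t^2 * (norm v)^2"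
      proof -
        have "Z + t *\<^sub>R v - Y = (Z - Y) + t *\<^sub>R v" by simp
        thus ?thesis by (simp only: power2_norm_eq_inner inner_add_left inner_add_right inner_scaleR_left inner_scaleR_right inner_commute[of v "Z - Y"]) (simp add: power2_eq_square algebra_simps)
      qed
      moreover have "f (Z + t *\<^sub>R v) \<le> f Z + t * (f y - f Z)" using cvx[of t Z y] t t0_def by (simp add: v_def)
      ultimately have "f Z \<le> f Z + t * (f y - f Z) + lam/2 * (2 * t * (v \<bullet> (Z - Y)) + t^2 * (norm v)^2)"
        unfolding h_def by (simp add: algebra_simps)
      hence "0 \<le> t * ((f y - f Z) + lam * (v \<bullet> (Z - Y)) + t * (lam/2 * (norm v)^2))"
        by (simp add: algebra_simps power2_eq_square)
      hence "0 \<le> (f y - f Z) + lam * (v \<bullet> (Z - Y)) + t * (lam/2 * (norm v)^2)"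
        using t by (simp add: zero_le_mult_iff)
      moreover have "v \<bullet> (Z - Y) = - (v \<bullet> (Y - Z))" by (simp add: inner_diff_right)
      ultimately show "lam * (v \<bullet> (Y - Z)) - t * (lam / 2 * (norm v)\<^sup>2) \<le> f y - f Z" by simp
    qed
    thus "f y \<ge> f Z + (lam *\<^sub>R (Y - Z)) \<bullet> (y - Z)" by (simp add: v_def inner_commute)
  qed
  thus ?thesis using dle d_def by blast
qed


lemma maxaffine_cvx:
  assumes "m \<ge> 1" "0 \<le> t" "t \<le> 1"
  shows "maxaffine A b m (x + t *\<^sub>R (y - x)) \<le> maxaffine A b m x + t * (maxaffine A b m y - maxaffine A b m x)"
proof -
  let ?f = "maxaffine A b m"
  have ne: "(\<lambda>k. A k \<bullet> z + b k) ` {1..m} \<noteq> {}" for z using assms(1) by auto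
  have ge: "A k \<bullet> z + b k \<le> ?f z" if "k \<in> {1..m}" for k z
    unfolding maxaffine_def using that by (intro Max_ge) auto
  have "A k \<bullet> (x + t *\<^sub>R (y - x)) + b k \<le> ?f x + t * (?f y - ?f x)" if k: "k \<in> {1..m}" for k
  proof -
    have "A k \<bullet> (x + t *\<^sub>R (y - x)) + b k = (1 - t) * (A k \<bullet> x + b k) + t * (A k \<bullet> y + b k)"
      by (simp add: inner_add_right inner_diff_right algebra_simps)
    also have "\<dots> \<le> (1 - t) * ?f x + t * ?f y"
      using ge[OF k, of x] ge[OF k, of y] assms by (intro add_mono mult_left_mono) auto
    finally show ?thesis by (simp add: algebra_simps)
  qed
  thus ?thesis unfolding maxaffine_def[of A b m "x + t *\<^sub>R (y - x)"] using ne by (subst Max_le_iff) auto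
qed

lemma maxaffine_lip:
  assumes "m \<ge> 1"
  shows "maxaffine A b m x \<le> maxaffine A b m y + ((\<Sum>k\<in>{1..m}. norm (A k)) + 1) * dist x y"
proof -
  let ?f = "maxaffine A b m"
  let ?L = "(\<Sum>k\<in>{1..m}. norm (A k)) + 1"
  have ne: "(\<lambda>k. A k \<bullet> z + b k) ` {1..m} \<noteq> {}" for z using assms(1) by auto
  have ge: "A k \<bullet> z + b k \<le> ?f z" if "k \<in> {1..m}" for k z
    unfolding maxaffine_def using that by (intro Max_ge) auto
  have "A k \<bullet> x + b k \<le> ?f y + ?L * dist x y" if k: "k \<in> {1..m}" for k
  proof -
    have "A k \<bullet> x + b k = (A k \<bullet> y + b k) + A k \<bullet> (x - y)" by (simp add: inner_diff_right)
    also have "A k \<bullet> (x - y) \<le> norm (A k) * norm (x - y)" by (rule norm_cauchy_schwarz)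
    also have "norm (A k) \<le> ?L"
    proof -
      have "norm (A k) \<le> (\<Sum>k\<in>{1..m}. norm (A k))" using k by (intro member_le_sum) auto
      thus ?thesis by simp
    qed
    hence "norm (A k) * norm (x - y) \<le> ?L * dist x y" by (simp add: dist_norm mult_right_mono)
    finally show ?thesis using ge[OF k, of y] by linarith
  qed
  thus ?thesis unfolding maxaffine_def[of A b m x] using ne by (subst Max_le_iff) auto
qed

theorem lemma2p3:
  fixes A :: "nat \<Rightarrow> real ^ 'n" and b :: "nat \<Rightarrow> real" and m :: nat
    and X0 :: "real ^ 'n" and R dlow :: real
  assumes "m \<ge> 1"
    and "\<forall>k\<in>{1..m}. norm (A k) > 0"
    and "R > 0" and "dlow > 0"
    and "\<forall>X\<in>ball X0 R. 0 \<notin> subdifferential (maxaffine A b m) X"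
    and "\<forall>X\<in>ball X0 R. \<forall>d\<in>subdifferential (maxaffine A b m) X. norm d \<ge> dlow"
  shows "\<exists>X\<in>ball X0 R. maxaffine A b m X \<le> maxaffine A b m X0 - dlow * (R / 2)"
proof -
  define f where "f = maxaffine A b m"
  define L where "L = (\<Sum>k\<in>{1..m}. norm (A k)) + 1"
  have L: "L > 0" unfolding L_def by (simp add: add_nonneg_pos sum_nonneg)
  define lam where "lam = 8 * L / R"
  have lam: "lam > 0" using L assms(3) by (simp add: lam_def)
  have Llam: "2 * L / lam = R / 4" using L assms(3) by (simp add: lam_def field_simps)
  have cv: "\<And>x y t. 0 \<le> t \<Longrightarrow> t \<le> 1 \<Longrightarrow> f (x + t *\<^sub>R (y - x)) \<le> f x + t * (f y - f x)"
    unfolding f_def using maxaffine_cvx[OF assms(1)] by blast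
  have lp: "\<And>x y. f x \<le> f y + L * dist x y" unfolding f_def L_def using maxaffine_lip[OF assms(1)] by blast
  have "\<forall>Y. \<exists>Z. dist Y Z \<le> 2*L/lam \<and> (\<forall>y. f y \<ge> f Z + (lam *\<^sub>R (Y - Z)) \<bullet> (y - Z))"
  proof
    fix Y
    show "\<exists>Z. dist Y Z \<le> 2*L/lam \<and> (\<forall>y. f y \<ge> f Z + (lam *\<^sub>R (Y - Z)) \<bullet> (y - Z))"
      by (rule prox_step[OF cv lp L lam])
  qed
  then obtain P where P: "\<And>Y. dist Y (P Y) \<le> R/4" "\<And>Y y. f y \<ge> f (P Y) + (lam *\<^sub>R (Y - P Y)) \<bullet> (y - P Y)"
    unfolding Llam by metis
  define \<delta> where "\<delta> = dlow / lam"
  have \<delta>: "\<delta> > 0" using assms(4) lam by (simp add: \<delta>_def)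
  have claim: "\<exists>X s. min (real n * \<delta>) (R/2) \<le> s \<and> s < 3*R/4 \<and> dist X0 X \<le> s \<and> f X \<le> f X0 - dlow * s" for n
  proof (induction n)
    case 0
    show ?case by (rule exI[of _ X0], rule exI[of _ 0]) (use assms(3) \<delta> in auto)
  next
    case (Suc n)
    then obtain X s where Xs: "min (real n * \<delta>) (R/2) \<le> s" "s < 3*R/4" "dist X0 X \<le> s" "f X \<le> f X0 - dlow * s"
      by blast
    show ?case
    proof (cases "s \<ge> R/2")
      case True
      thus ?thesis using Xs by (intro exI[of _ X] exI[of _ s]) auto
    next
      case False
      hence ns: "real n * \<delta> \<le> s" using Xs(1) by (auto simp: min_def split: if_splits)
      define Z where "Z = P X"
      define d where "d = dist X Z"
      have d: "d \<le> R/4" "d \<ge> 0" using P(1)[of X] by (auto simp: d_def Z_def)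
      have "dist X0 Z \<le> dist X0 X + dist X Z" by (rule dist_triangle)
      hence dZ: "dist X0 Z \<le> s + d" using Xs(3) by (simp add: d_def)
      hence "Z \<in> ball X0 R" using False d assms(3) by simp
      moreover have "lam *\<^sub>R (X - Z) \<in> subdifferential f Z"
        unfolding subdifferential_def using P(2)[of X] by (auto simp: Z_def)
      ultimately have "norm (lam *\<^sub>R (X - Z)) \<ge> dlow" using assms(6) unfolding f_def by blast
      hence ld: "lam * d \<ge> dlow" using lam by (simp add: d_def dist_norm)
      have "f X \<ge> f Z + (lam *\<^sub>R (X - Z)) \<bullet> (X - Z)" using P(2)[of X X] by (simp add: Z_def)
      also have "(lam *\<^sub>R (X - Z)) \<bullet> (X - Z) = lam * d * d"
        by (simp add: d_def dist_norm power2_norm_eq_inner[symmetric] power2_eq_square)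
      finally have fZ: "f Z \<le> f X - lam * d * d" by simp
      have "dlow * d \<le> lam * d * d" using ld d(2) by (simp add: mult_right_mono)
      hence fZ2: "f Z \<le> f X0 - dlow * (s + d)" using fZ Xs(4) by (simp add: algebra_simps)
      have "\<delta> \<le> d" using ld lam by (simp add: \<delta>_def field_simps)
      hence "real (Suc n) * \<delta> \<le> s + d" using ns by (simp add: algebra_simps)
      thus ?thesis using dZ fZ2 False d
        by (intro exI[of _ Z] exI[of _ "s + d"]) auto
    qed
  qed
  define n where "n = nat \<lceil>R / (2 * \<delta>)\<rceil>"
  have "R / (2 * \<delta>) \<le> real n" unfolding n_def by linarith
  hence "R/2 \<le> real n * \<delta>" using \<delta> by (simp add: field_simps)
  then obtain X s where Xs: "R/2 \<le> s" "s < 3*R/4" "dist X0 X \<le> s" "f X \<le> f X0 - dlow * s"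
    using claim[of n] by (auto simp: min_def split: if_splits)
  have "X \<in> ball X0 R" using Xs assms(3) by simp
  moreover have "dlow * (R/2) \<le> dlow * s" using Xs(1) assms(4) by simp
  ultimately show ?thesis using Xs(4) unfolding f_def by (intro bexI[of _ X]) auto
qed

end
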